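(* Let $\mathbb{A}\colon\mathbb{R}^d\to\mathbb{R}^d$ be Lipschitz continuous and monotone, $T>0$, $X_0\in\mathbb{R}^d$, and let $(X,Z)\in\mathcal{C}^1([0,T),\mathbb{R}^{2d})$ be the solution of \[ \dot X(t)=-Z(t)-\mathbb{A}(X(t)),\qquad \dot Z(t)=-\frac{1}{T-t}Z(t)-\frac{1}{T-t}\mathbb{A}(X(t)),\qquad X(0)=X_0,\ Z(0)=0. \] Then $X$ extends continuously to $[0,T]$ (i.e., $X(T):=\lim_{t\to T^-}X(t)$ exists), and \[ \lim_{t\to T^-}\dot X(t)=\lim_{t\to T^-}\frac{X(t)-X(T)}{t-T}=0. \]
   Context: Monotone: $\langle\mathbb{A}x-\mathbb{A}y,x-y\rangle\ge0$ for all $x,y$. *)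

theory Defs
  imports "HOL-Analysis.Analysis"
begin

definition monotone_op :: "('a::real_inner \<Rightarrow> 'a) \<Rightarrow> bool" where
  "monotone_op A \<longleftrightarrow> (\<forall>x y. (A x - A y) \<bullet> (x - y) \<ge> 0)"

end

theory Submission
  imports Defs
begin

lemma dini_eps:
  fixes f :: "real \<Rightarrow> real"
  assumes cont: "continuous_on {a..b} f" and ab: "a \<le> b" and e: "e > 0"
    and D: "\<And>t. t \<in> {a..<b} \<Longrightarrow> eventually (\<lambda>s. f s \<le> f t + e * (s - t)) (at_right t)"
  shows "f b \<le> f a + e * (b - a)"
proof -
  define S where "S = {x \<in> {a..b}. f x \<le> f a + e * (x - a)}"
  have aS: "a \<in> S" using ab by (simp add: S_def)
  have bdd: "bdd_above S" by (auto simp: S_def bdd_above_def)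
  have cl: "closed S"
  proof -
    have "S = {a..b} \<inter> (\<lambda>x. f x - e * (x - a)) -` {..f a}"
      by (auto simp: S_def)
    moreover have "continuous_on {a..b} (\<lambda>x. f x - e * (x - a))"
      by (intro continuous_intros cont)
    ultimately show ?thesis
      using continuous_closed_preimage[of "{a..b}" "\<lambda>x. f x - e * (x - a)" "{..f a}"]
      by (simp add: Int_commute)
  qed
  define c where "c = Sup S"
  have cS: "c \<in> S" unfolding c_def using closed_contains_Sup[OF _ bdd cl] aS by blast
  have "c = b"
  proof (rule ccontr)
    assume "c \<noteq> b"
    with cS have cb: "c < b" "a \<le> c" by (auto simp: S_def)
    from D[of c] cb obtain d where d: "d > c" "\<And>y. y > c \<Longrightarrow> y < d \<Longrightarrow> f y \<le> f c + e * (y - c)"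
      unfolding eventually_at_right_field by auto
    define y where "y = (c + min d b) / 2"
    have y: "c < y" "y < d" "y < b" using d cb by (auto simp: y_def)
    have "f y \<le> f a + e * (y - a)"
      using d(2)[OF y(1,2)] cS by (auto simp: S_def algebra_simps)
    hence "y \<in> S" using y cb by (auto simp: S_def)
    hence "y \<le> c" unfolding c_def using bdd by (rule cSup_upper)
    with y show False by simp
  qed
  with cS show ?thesis by (simp add: S_def)
qed

lemma dini_mono:
  fixes f :: "real \<Rightarrow> real"
  assumes cont: "continuous_on {a..b} f" and ab: "a \<le> b"
    and D: "\<And>t e. t \<in> {a..<b} \<Longrightarrow> e > 0 \<Longrightarrow> eventually (\<lambda>s. f s \<le> f t + e * (s - t)) (at_right t)"
  shows "f b \<le> f a"
proof (cases "a = b")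
  case True then show ?thesis by simp
next
  case False
  hence ab': "a < b" using ab by simp
  show ?thesis
  proof (rule field_le_epsilon)
    fix d :: real assume d: "d > 0"
    have "f b \<le> f a + (d / (b - a)) * (b - a)"
    proof (rule dini_eps[OF cont ab])
      show "d / (b - a) > 0" using d ab' by simp
      fix t assume "t \<in> {a..<b}"
      then show "eventually (\<lambda>s. f s \<le> f t + d / (b - a) * (s - t)) (at_right t)"
        using D[of t "d / (b - a)"] d ab' by simp
    qed
    thus "f b \<le> f a + d" using ab' by simp
  qed
qed
lemma step_ineq:
  fixes w e1 e2 D :: "'a::real_inner"
  assumes h: "h > 0" and c: "h < c" and L: "L \<ge> 0"
    and nD: "norm D \<le> L * h * norm (e1 - w)"
    and mD: "D \<bullet> (e1 - w) \<ge> 0"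
  shows "(norm ((1 - h / c) *\<^sub>R w + h *\<^sub>R e2 + D))\<^sup>2 \<le> ((c - h) / c)\<^sup>2 * (norm w)\<^sup>2
     + h * (2 * norm w * norm e2 + 2 * norm e1 * L * norm (e1 - w) + h * (norm e2 + L * norm (e1 - w))\<^sup>2)"
proof -
  define a where "a = 1 - h / c"
  have c0: "c > 0" using h c by simp
  have a01: "0 \<le> a" "a \<le> 1" using h c c0 by (auto simp: a_def field_simps)
  have ac: "a = (c - h) / c" using c0 by (simp add: a_def field_simps)
  define v where "v = h *\<^sub>R e2 + D"
  have wD: "w \<bullet> D \<le> norm e1 * (L * h * norm (e1 - w))"
  proof -
    have "w \<bullet> D \<le> e1 \<bullet> D" using mD by (simp add: inner_diff_right inner_commute)
    also have "\<dots> \<le> norm e1 * norm D" by (rule norm_cauchy_schwarz)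
    also have "\<dots> \<le> norm e1 * (L * h * norm (e1 - w))" by (rule mult_left_mono[OF nD]) simp
    finally show ?thesis .
  qed
  define B where "B = h * norm w * norm e2 + norm e1 * (L * h * norm (e1 - w))"
  have B0: "B \<ge> 0" using h L by (simp add: B_def)
  have wv: "w \<bullet> v \<le> B"
  proof -
    have "w \<bullet> v = h * (w \<bullet> e2) + w \<bullet> D" by (simp add: v_def inner_add_right)
    also have "h * (w \<bullet> e2) \<le> h * (norm w * norm e2)"
      using h by (intro mult_left_mono) (auto intro: norm_cauchy_schwarz)
    finally show ?thesis using wD by (simp add: B_def mult.assoc)
  qed
  have awv: "a * (w \<bullet> v) \<le> B"
  proof -
    have "a * (w \<bullet> v) \<le> a * B" using wv a01(1) by (rule mult_left_mono)
    also have "\<dots> \<le> B" using a01 B0 by (simp add: mult_left_le_one_le)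
    finally show ?thesis .
  qed
  have nv: "norm v \<le> h * (norm e2 + L * norm (e1 - w))"
  proof -
    have "norm v \<le> norm (h *\<^sub>R e2) + norm D" unfolding v_def by (rule norm_triangle_ineq)
    also have "\<dots> \<le> h * norm e2 + L * h * norm (e1 - w)" using h nD by simp
    finally show ?thesis by (simp add: algebra_simps)
  qed
  have nv2: "(norm v)\<^sup>2 \<le> (h * (norm e2 + L * norm (e1 - w)))\<^sup>2"
    using nv by (intro power_mono) auto
  have "(norm (a *\<^sub>R w + v))\<^sup>2 = a\<^sup>2 * (norm w)\<^sup>2 + 2 * a * (w \<bullet> v) + (norm v)\<^sup>2"
    unfolding power2_norm_eq_inner
    by (simp add: inner_add_left inner_add_right inner_commute power2_eq_square algebra_simps)
  also have "\<dots> \<le> a\<^sup>2 * (norm w)\<^sup>2 + 2 * B + (h * (norm e2 + L * norm (e1 - w)))\<^sup>2"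
    using awv nv2 by simp
  finally have "(norm (a *\<^sub>R w + v))\<^sup>2 \<le> a\<^sup>2 * (norm w)\<^sup>2 + 2 * B + (h * (norm e2 + L * norm (e1 - w)))\<^sup>2" .
  moreover have "a *\<^sub>R w + v = (1 - h / c) *\<^sub>R w + h *\<^sub>R e2 + D" by (simp add: a_def v_def add.assoc)
  moreover have "a\<^sup>2 * (norm w)\<^sup>2 + 2 * B + (h * (norm e2 + L * norm (e1 - w)))\<^sup>2
     = ((c - h) / c)\<^sup>2 * (norm w)\<^sup>2
     + h * (2 * norm w * norm e2 + 2 * norm e1 * L * norm (e1 - w) + h * (norm e2 + L * norm (e1 - w))\<^sup>2)"
    by (simp add: ac B_def power2_eq_square algebra_simps)
  ultimately show ?thesis by simp
qed
lemma at_right_le: "0 \<le> t \<Longrightarrow> t < T \<Longrightarrow> at_right t \<le> at t within {0..<(T::real)}"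
proof -
  assume a: "0 \<le> t" "t < T"
  have "at_right t = at t within {t..T}" using at_within_Icc_at_right[OF a(2)] by simp
  also have "\<dots> = at t within {t..<T}"
    by (rule at_within_nhd[of _ "{..<T}"]) (use a in auto)
  also have "\<dots> \<le> at t within {0..<T}" using a by (intro at_le) auto
  finally show ?thesis .
qed

lemma deriv_right:
  fixes f :: "real \<Rightarrow> 'a::real_normed_vector"
  assumes "(f has_vector_derivative f') (at t within {0..<T})" "0 \<le> t" "t < T"
  shows "((\<lambda>s. (1 / (s - t)) *\<^sub>R (f s - f t) - f') \<longlongrightarrow> 0) (at_right t)"
proof -
  have "(f has_vector_derivative f') (at t within {t<..<T})"
    using assms(1) by (rule has_vector_derivative_within_subset) (use assms in auto)
  moreover have "at t within {t<..<T} = at_right t"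
    by (rule at_within_nhd[of _ "{..<T}"]) (use assms in auto)
  ultimately have "(f has_vector_derivative f') (at_right t)" by simp
  then have "((\<lambda>y. (1 / norm (y - t)) *\<^sub>R (f y - (f t + (y - t) *\<^sub>R f'))) \<longlongrightarrow> 0) (at_right t)"
    unfolding has_vector_derivative_def has_derivative_within by simp
  moreover have "eventually (\<lambda>y. (1 / norm (y - t)) *\<^sub>R (f y - (f t + (y - t) *\<^sub>R f'))
      = (1 / (y - t)) *\<^sub>R (f y - f t) - f') (at_right t)"
    unfolding eventually_at_right_field
    by (intro exI[of _ "t + 1"]) (auto simp: scaleR_diff_right scaleR_add_right)
  ultimately show ?thesis using tendsto_cong by fastforce
qed
lemma at_left_eq: "0 < T \<Longrightarrow> at T within {0..<(T::real)} = at_left T"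
proof -
  assume a: "0 < T"
  have "at T within {0..<T} = at T within {0..T}"
    by (rule at_within_nhd[of _ "UNIV"]) auto
  also have "\<dots> = at_left T" using at_within_Icc_at_left[OF a] by simp
  finally show ?thesis .
qed
theorem corollaryH4:
  fixes A :: "real ^ 'd \<Rightarrow> real ^ 'd"
    and X Z :: "real \<Rightarrow> real ^ 'd"
    and T :: real and X0 :: "real ^ 'd"
  assumes lip: "\<exists>L. lipschitz_on L UNIV A"
    and mono: "monotone_op A"
    and T_pos: "T > 0"
    and X_ode: "\<And>t. t \<in> {0..<T} \<Longrightarrow>
        (X has_vector_derivative (- Z t - A (X t))) (at t within {0..<T})"
    and Z_ode: "\<And>t. t \<in> {0..<T} \<Longrightarrow>
        (Z has_vector_derivative (- (1 / (T - t)) *\<^sub>R Z t - (1 / (T - t)) *\<^sub>R A (X t)))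
          (at t within {0..<T})"
    and X_init: "X 0 = X0"
    and Z_init: "Z 0 = 0"
  shows "\<exists>XT. (X \<longlongrightarrow> XT) (at_left T)
           \<and> ((\<lambda>t. vector_derivative X (at t)) \<longlongrightarrow> 0) (at_left T)
           \<and> ((\<lambda>t. (1 / (t - T)) *\<^sub>R (X t - XT)) \<longlongrightarrow> 0) (at_left T)"
proof -
  obtain L where L: "lipschitz_on L UNIV A" using lip by blast
  have L0: "0 \<le> L" using L by (simp add: lipschitz_on_def)
  have Lip: "norm (A x - A y) \<le> L * norm (x - y)" for x y
    using L by (simp add: lipschitz_on_def dist_norm)
  have monoA: "(A x - A y) \<bullet> (x - y) \<ge> 0" for x y using mono by (simp add: monotone_op_def)
  define W where "W t = Z t + A (X t)" for t
  have Xd: "(X has_vector_derivative - W t) (at t within {0..<T})" if "t \<in> {0..<T}" for t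
    using X_ode[OF that] by (simp add: W_def)
  have Zd: "(Z has_vector_derivative - (1 / (T - t)) *\<^sub>R W t) (at t within {0..<T})" if "t \<in> {0..<T}" for t
    using Z_ode[OF that] by (simp add: W_def scaleR_add_right)
  have Xc: "continuous_on {0..<T} X"
    using Xd has_vector_derivative_continuous continuous_on_eq_continuous_within by blast
  have Zc: "continuous_on {0..<T} Z"
    using Zd has_vector_derivative_continuous continuous_on_eq_continuous_within by blast
  have Ac: "continuous_on UNIV A" using L lipschitz_on_continuous_on by blast
  have Wc: "continuous_on {0..<T} W"
    unfolding W_def by (intro continuous_intros Zc continuous_on_compose2[OF Ac Xc]) auto
  define \<psi> where "\<psi> t = (norm (W t))\<^sup>2 / (T - t)\<^sup>2" for t
  have dini: "eventually (\<lambda>s. \<psi> s \<le> \<psi> t + e * (s - t)) (at_right t)"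
    if t: "t \<in> {0..<T}" and e: "e > 0" for t e
  proof -
    define c where "c = T - t"
    have c: "c > 0" using t by (simp add: c_def)
    define w where "w = W t"
    define e1 where "e1 s = (1 / (s - t)) *\<^sub>R (X s - X t) + w" for s
    define e2 where "e2 s = (1 / (s - t)) *\<^sub>R (Z s - Z t) + (1 / c) *\<^sub>R w" for s
    have e1: "(e1 \<longlongrightarrow> 0) (at_right t)"
      using deriv_right[OF Xd[OF t]] t unfolding e1_def[abs_def] by (simp add: w_def)
    have e2: "(e2 \<longlongrightarrow> 0) (at_right t)"
      using deriv_right[OF Zd[OF t]] t unfolding e2_def[abs_def] by (simp add: w_def c_def)
    define g where "g s = (2 * norm w * norm (e2 s) + 2 * norm (e1 s) * L * norm (e1 s - w)
        + (s - t) * (norm (e2 s) + L * norm (e1 s - w))\<^sup>2) / (T - s)\<^sup>2" for s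
    have g: "(g \<longlongrightarrow> 0) (at_right t)"
    proof -
      have "(g \<longlongrightarrow> (2 * norm w * norm (0::real^'d) + 2 * norm (0::real^'d) * L * norm (0 - w)
          + (t - t) * (norm (0::real^'d) + L * norm (0 - w))\<^sup>2) / (T - t)\<^sup>2) (at_right t)"
        unfolding g_def using c
        by (intro tendsto_intros e1 e2) (auto simp: c_def)
      then show ?thesis by simp
    qed
    have ev1: "eventually (\<lambda>s. g s < e) (at_right t)" using order_tendstoD(2)[OF g e] .
    have ev2: "eventually (\<lambda>s. t < s \<and> s < T) (at_right t)"
      unfolding eventually_at_right_field using t by (intro exI[of _ T]) auto
    show ?thesis
      using ev1 ev2
    proof eventually_elim
      case (elim s)
      define h where "h = s - t"
      have h: "h > 0" "h < c" using elim by (auto simp: h_def c_def)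
      have hX: "X s - X t = h *\<^sub>R (e1 s - w)" using h by (simp add: e1_def h_def)
      have hZ: "Z s - Z t = h *\<^sub>R (e2 s - (1 / c) *\<^sub>R w)" using h by (simp add: e2_def h_def)
      define D where "D = A (X s) - A (X t)"
      have nD: "norm D \<le> L * h * norm (e1 s - w)"
        using Lip[of "X s" "X t"] h by (simp add: D_def hX mult.assoc)
      have mD: "D \<bullet> (e1 s - w) \<ge> 0"
      proof -
        have "0 \<le> D \<bullet> (X s - X t)" using monoA by (simp add: D_def)
        also have "\<dots> = h * (D \<bullet> (e1 s - w))" by (simp add: hX)
        finally show ?thesis using h by (simp add: zero_le_mult_iff)
      qed
      have Ws: "W s = (1 - h / c) *\<^sub>R w + h *\<^sub>R e2 s + D"
      proof -
        have "W s = (Z s - Z t) + (Z t + A (X t)) + D" by (simp add: W_def D_def)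
        also have "\<dots> = h *\<^sub>R (e2 s - (1 / c) *\<^sub>R w) + w + D" by (simp add: hZ w_def W_def)
        finally show ?thesis by (simp add: algebra_simps)
      qed
      have Ts: "T - s = c - h" by (simp add: h_def c_def)
      have Tsn: "(c - h)\<^sup>2 > 0" using h by simp
      have key: "(norm (W s))\<^sup>2 \<le> ((c - h) / c)\<^sup>2 * (norm w)\<^sup>2 + h * (g s * (c - h)\<^sup>2)"
        using step_ineq[OF h(1) h(2) L0 nD mD] Ws Tsn by (simp add: g_def Ts h_def)
      have "\<psi> s = (norm (W s))\<^sup>2 / (c - h)\<^sup>2" by (simp add: \<psi>_def Ts)
      also have "\<dots> \<le> (((c - h) / c)\<^sup>2 * (norm w)\<^sup>2 + h * (g s * (c - h)\<^sup>2)) / (c - h)\<^sup>2"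
        using key Tsn by (intro divide_right_mono) auto
      also have "\<dots> = (norm w)\<^sup>2 / c\<^sup>2 + h * g s" using h Tsn c by (simp add: field_simps)
      also have "\<dots> \<le> (norm w)\<^sup>2 / c\<^sup>2 + h * e" using elim h by simp
      also have "\<dots> = \<psi> t + e * (s - t)" by (simp add: \<psi>_def w_def c_def h_def)
      finally show ?case .
    qed
  qed
  define K where "K = norm (W 0) / T"
  have K0: "K \<ge> 0" using T_pos by (simp add: K_def)
  have Wb: "norm (W s) \<le> K * (T - s)" if s: "s \<in> {0..<T}" for s
  proof -
    have "\<psi> s \<le> \<psi> 0"
    proof (rule dini_mono[where f=\<psi> and a=0 and b=s])
      show "continuous_on {0..s} \<psi>"
        unfolding \<psi>_def using s
        by (intro continuous_intros continuous_on_subset[OF Wc]) auto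
      show "0 \<le> s" using s by simp
      fix t e :: real assume "t \<in> {0..<s}" "e > 0"
      then show "eventually (\<lambda>r. \<psi> r \<le> \<psi> t + e * (r - t)) (at_right t)"
        using dini[of t e] s by auto
    qed
    hence "(norm (W s) / (T - s))\<^sup>2 \<le> K\<^sup>2"
      by (simp add: \<psi>_def K_def power_divide)
    hence "norm (W s) / (T - s) \<le> K" using K0 by (rule power2_le_imp_le)
    thus ?thesis using s by (simp add: field_simps)
  qed
  have XdA: "(X has_vector_derivative - W x) (at x)" if "0 < x" "x < T" for x
  proof -
    have "(X has_vector_derivative - W x) (at x within {0<..<T})"
    proof (rule has_vector_derivative_within_subset)
      show "(X has_vector_derivative - W x) (at x within {0..<T})" using that by (intro Xd) auto
    qed auto
    moreover have "at x within {0<..<T} = at x"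
      by (rule at_within_open) (use that in auto)
    ultimately show ?thesis by simp
  qed
  have Xb: "norm (X s' - X s) \<le> K * (T - s) * (s' - s)" if "0 \<le> s" "s \<le> s'" "s' < T" for s s'
  proof (cases "s = s'")
    case True then show ?thesis by simp
  next
    case False
    hence lt: "s < s'" using that by simp
    have "norm (X s' - X s) \<le> K * (T - s) * s' - K * (T - s) * s"
    proof (rule differentiable_bound_general[OF lt, where f' = "\<lambda>x. - W x" and \<phi>' = "\<lambda>x. K * (T - s)"])
      show "continuous_on {s..s'} X" using that by (intro continuous_on_subset[OF Xc]) auto
      show "continuous_on {s..s'} (\<lambda>x. K * (T - s) * x)" by (intro continuous_intros)
      fix x assume x: "s < x" "x < s'"
      show "(X has_vector_derivative - W x) (at x)" using x that by (intro XdA) auto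
      show "((\<lambda>x. K * (T - s) * x) has_vector_derivative K * (T - s)) (at x)"
        by (auto intro!: derivative_eq_intros simp: has_real_derivative_iff_has_vector_derivative[symmetric])
      have "norm (W x) \<le> K * (T - x)" using x that by (intro Wb) auto
      also have "\<dots> \<le> K * (T - s)" using x K0 by (intro mult_left_mono) auto
      finally show "norm (- W x) \<le> K * (T - s)" by simp
    qed
    thus ?thesis by (simp add: algebra_simps)
  qed
  have Xlip: "(K * T)-lipschitz_on {0..<T} X"
  proof (rule lipschitz_onI)
    show "0 \<le> K * T" using K0 T_pos by simp
    fix x y assume xy: "x \<in> {0..<T}" "y \<in> {0..<T}"
    have *: "norm (X b - X a) \<le> K * T * (b - a)" if "0 \<le> a" "a \<le> b" "b < T" for a b
    proof -
      have "norm (X b - X a) \<le> K * (T - a) * (b - a)" using Xb that by blast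
      also have "\<dots> \<le> K * T * (b - a)" using that K0 by (intro mult_right_mono mult_left_mono) auto
      finally show ?thesis .
    qed
    show "dist (X x) (X y) \<le> K * T * dist x y"
    proof (cases "x \<le> y")
      case True then show ?thesis using *[of x y] xy by (simp add: dist_norm norm_minus_commute)
    next
      case False then show ?thesis using *[of y x] xy by (simp add: dist_norm)
    qed
  qed
  obtain l where l0: "(X \<longlongrightarrow> l) (at T within {0..<T})"
    using uniformly_continuous_on_extension_at_closure[OF lipschitz_on_uniformly_continuous[OF Xlip], of T]
      T_pos by auto
  have l: "(X \<longlongrightarrow> l) (at_left T)" using l0 at_left_eq[OF T_pos] by simp
  have evl: "eventually (\<lambda>x. 0 < x \<and> x < T) (at_left T)"
    unfolding eventually_at_left_field using T_pos by (intro exI[of _ 0]) auto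
  have Xl: "norm (X s - l) \<le> K * (T - s)\<^sup>2" if s: "0 \<le> s" "s < T" for s
  proof -
    have lim: "((\<lambda>r. norm (X r - X s)) \<longlongrightarrow> norm (l - X s)) (at_left T)"
      by (intro tendsto_intros l)
    have "eventually (\<lambda>r. norm (X r - X s) \<le> K * (T - s)\<^sup>2) (at_left T)"
      unfolding eventually_at_left_field
    proof (intro exI[of _ s] conjI allI impI)
      show "s < T" by fact
      fix r assume r: "s < r" "r < T"
      have "norm (X r - X s) \<le> K * (T - s) * (r - s)" using Xb r s by auto
      also have "\<dots> \<le> K * (T - s) * (T - s)" using r s K0 by (intro mult_left_mono) auto
      finally show "norm (X r - X s) \<le> K * (T - s)\<^sup>2" by (simp add: power2_eq_square)
    qed
    then have "norm (l - X s) \<le> K * (T - s)\<^sup>2"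
      using tendsto_upperbound[OF lim] by auto
    thus ?thesis by (simp add: norm_minus_commute)
  qed
  have gK: "((\<lambda>t. K * (T - t)) \<longlongrightarrow> 0) (at_left T)"
  proof -
    have "((\<lambda>t. K * (T - t)) \<longlongrightarrow> K * (T - T)) (at_left T)" by (intro tendsto_intros)
    thus ?thesis by simp
  qed
  show ?thesis
  proof (intro exI[of _ l] conjI l)
    show "((\<lambda>t. vector_derivative X (at t)) \<longlongrightarrow> 0) (at_left T)"
    proof (rule Lim_null_comparison[OF _ gK])
      show "eventually (\<lambda>t. norm (vector_derivative X (at t)) \<le> K * (T - t)) (at_left T)"
        using evl
      proof eventually_elim
        case (elim t)
        then have "vector_derivative X (at t) = - W t" using XdA by (intro vector_derivative_at) auto
        then show ?case using Wb[of t] elim by simp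
      qed
    qed
    show "((\<lambda>t. (1 / (t - T)) *\<^sub>R (X t - l)) \<longlongrightarrow> 0) (at_left T)"
    proof (rule Lim_null_comparison[OF _ gK])
      show "eventually (\<lambda>t. norm ((1 / (t - T)) *\<^sub>R (X t - l)) \<le> K * (T - t)) (at_left T)"
        using evl
      proof eventually_elim
        case (elim t)
        have "norm ((1 / (t - T)) *\<^sub>R (X t - l)) = norm (X t - l) / (T - t)"
          using elim by (simp add: abs_if minus_divide_right)
        also have "\<dots> \<le> K * (T - t)\<^sup>2 / (T - t)"
          using Xl[of t] elim by (intro divide_right_mono) auto
        also have "\<dots> = K * (T - t)" using elim by (simp add: power2_eq_square)
        finally show ?case .
      qed
    qed
  qed
qed
end
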